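(* Let $\mathbf{M}=(c_{i,j})_{i,j\ge0}$ be a positive definite moment matrix, i.e. $c_{i,j}=\int z^i\bar z^j d\mu$ for some positive Borel measure $\mu$ on $\mathbb{C}$ with infinite support and finite moments, and let $\widehat{\mathbf{M}}=(c_{i+1,j+1})_{i,j\ge0}$ be the matrix obtained by removing the first row and first column of $\mathbf{M}$. Then $$\beta(\widehat{\mathbf{M}},\mathbf{M})=\lim_{n\to\infty} c_{n,n}^{1/n}.$$
   Context: For infinite Hermitian positive semidefinite matrices $\mathbf{A},\mathbf{B}$ with $\mathbf{B}$ positive definite, $\beta(\mathbf{A},\mathbf{B})=\sup\{v\mathbf{A}v^*/v\mathbf{B}v^*: v\in c_{00}\setminus\{0\}\}\in(-\infty,\infty]$, equivalently the limit as $n\to\infty$ of the largest generalized eigenvalue of the $(n+1)\times(n+1)$ truncation $\mathbf{A}_n$ with respect to $\mathbf{B}_n$; $c_{00}$ is the space of finitely supported complex row sequences. *)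

theory Defs
  imports "HOL-Analysis.Analysis"
begin

text \<open>Infinite matrices are functions nat => nat => complex, indexed from 0.\<close>

definition moment :: "complex measure \<Rightarrow> nat \<Rightarrow> nat \<Rightarrow> complex" where
  "moment \<mu> i j = integral\<^sup>L \<mu> (\<lambda>z. z ^ i * cnj z ^ j)"

definition shift_matrix :: "(nat \<Rightarrow> nat \<Rightarrow> complex) \<Rightarrow> nat \<Rightarrow> nat \<Rightarrow> complex" where
  "shift_matrix A i j = A (Suc i) (Suc j)"

definition c00 :: "(nat \<Rightarrow> complex) set" where
  "c00 = {v. finite {i. v i \<noteq> 0}}"

definition qform :: "(nat \<Rightarrow> nat \<Rightarrow> complex) \<Rightarrow> (nat \<Rightarrow> complex) \<Rightarrow> complex" where
  "qform A v = (\<Sum>i\<in>{i. v i \<noteq> 0}. \<Sum>j\<in>{j. v j \<noteq> 0}. v i * A i j * cnj (v j))"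

text \<open>beta(A,B) = sup { v A v^* / v B v^* : v in c00, v ~= 0 } in the extended reals
  (the forms are real for Hermitian matrices; we take real parts).\<close>
definition beta :: "(nat \<Rightarrow> nat \<Rightarrow> complex) \<Rightarrow> (nat \<Rightarrow> nat \<Rightarrow> complex) \<Rightarrow> ereal" where
  "beta A B = (SUP v \<in> c00 - {\<lambda>_. 0}. ereal (Re (qform A v) / Re (qform B v)))"

definition measure_support :: "complex measure \<Rightarrow> complex set" where
  "measure_support \<mu> = {z. \<forall>e>0. emeasure \<mu> (ball z e) > 0}"

end

theory Submission
  imports Defs "HOL-Real_Asymp.Real_Asymp"
begin

lemma moment_diag:
  "moment \<mu> n n = of_real (integral\<^sup>L \<mu> (\<lambda>z. norm z ^ (2*n)))"
proof -
  have "\<And>z::complex. z ^ n * cnj z ^ n = of_real (norm z ^ (2*n))"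
    by (metis complex_norm_square power_mult power_mult_distrib complex_cnj_power mult.commute of_real_power)
  then show ?thesis unfolding moment_def by (simp only: integral_complex_of_real)
qed

lemma qform_integral:
  fixes \<mu> :: "complex measure"
  assumes int: "\<And>i j. integrable \<mu> (\<lambda>z. z ^ i * cnj z ^ j)"
  shows "qform (\<lambda>i j. moment \<mu> (i+k) (j+k)) v =
     of_real (integral\<^sup>L \<mu> (\<lambda>z. norm z ^ (2*k) * (norm (\<Sum>i\<in>{i. v i \<noteq> 0}. v i * z ^ i))^2))"
    and "integrable \<mu> (\<lambda>z. norm z ^ (2*k) * (norm (\<Sum>i\<in>{i. v i \<noteq> 0}. v i * z ^ i))^2)"
proof -
  define I where "I = {i. v i \<noteq> 0}"
  define g where "g = (\<lambda>z::complex. \<Sum>i\<in>I. \<Sum>j\<in>I. v i * (z ^ (i+k) * cnj z ^ (j+k)) * cnj (v j))"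
  have ig: "integrable \<mu> g" unfolding g_def
    using int by simp
  have pw: "g z = of_real (norm z ^ (2*k) * (norm (\<Sum>i\<in>I. v i * z ^ i))^2)" for z
  proof -
    have a: "z^k * (\<Sum>i\<in>I. v i * z ^ i) = (\<Sum>i\<in>I. v i * z ^ (i+k))"
      by (simp add: sum_distrib_left power_add algebra_simps)
    have "g z = (\<Sum>i\<in>I. v i * z ^ (i+k)) * (\<Sum>j\<in>I. cnj (v j) * cnj z ^ (j+k))"
      unfolding g_def sum_product
      by (intro sum.cong refl) (simp add: algebra_simps)
    also have "\<dots> = (z^k * (\<Sum>i\<in>I. v i * z ^ i)) * cnj (z^k * (\<Sum>i\<in>I. v i * z ^ i))"
      unfolding a cnj_sum complex_cnj_mult complex_cnj_power by simp
    finally have "g z = (z^k * (\<Sum>i\<in>I. v i * z ^ i)) * cnj (z^k * (\<Sum>i\<in>I. v i * z ^ i))" .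
    also have "\<dots> = of_real ((norm (z^k * (\<Sum>i\<in>I. v i * z ^ i)))^2)"
      by (metis complex_norm_square)
    also have "\<dots> = of_real (norm z ^ (2*k) * (norm (\<Sum>i\<in>I. v i * z ^ i))^2)"
      by (simp add: norm_mult norm_power power_mult_distrib power_mult[symmetric] mult.commute)
    finally show ?thesis .
  qed
  have "qform (\<lambda>i j. moment \<mu> (i+k) (j+k)) v = integral\<^sup>L \<mu> g"
  proof -
    have "integral\<^sup>L \<mu> g = (\<Sum>i\<in>I. integral\<^sup>L \<mu> (\<lambda>z. \<Sum>j\<in>I. v i * (z ^ (i+k) * cnj z ^ (j+k)) * cnj (v j)))"
      unfolding g_def using int by simp
    also have "\<dots> = (\<Sum>i\<in>I. \<Sum>j\<in>I. integral\<^sup>L \<mu> (\<lambda>z. v i * (z ^ (i+k) * cnj z ^ (j+k)) * cnj (v j)))"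
      using int by simp
    finally show ?thesis unfolding qform_def moment_def I_def by simp
  qed
  also have "\<dots> = of_real (integral\<^sup>L \<mu> (\<lambda>z. norm z ^ (2*k) * (norm (\<Sum>i\<in>I. v i * z ^ i))^2))"
    unfolding pw by (rule integral_complex_of_real)
  finally show "qform (\<lambda>i j. moment \<mu> (i+k) (j+k)) v =
     of_real (integral\<^sup>L \<mu> (\<lambda>z. norm z ^ (2*k) * (norm (\<Sum>i\<in>{i. v i \<noteq> 0}. v i * z ^ i))^2))"
    unfolding I_def .
  have "integrable \<mu> (\<lambda>z. Re (g z))" using ig by (rule integrable_Re)
  then show "integrable \<mu> (\<lambda>z. norm z ^ (2*k) * (norm (\<Sum>i\<in>{i. v i \<noteq> 0}. v i * z ^ i))^2)"
    unfolding pw I_def by simp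
qed

lemma powr_lim1: "m > 0 \<Longrightarrow> (\<lambda>n. (m::real) powr (1 / real n)) \<longlonglongrightarrow> 1"
  by real_asymp

lemma root_mult_pow:
  assumes "m \<ge> 0" "t > 0" "n > 0"
  shows "(m * t ^ n) powr (1 / real n) = m powr (1 / real n) * (t::real)"
proof -
  have "(t ^ n) powr (1 / real n) = t"
    using assms by (simp add: powr_realpow[symmetric] powr_powr)
  then show ?thesis using assms by (simp add: powr_mult)
qed

theorem corollary5:
  fixes \<mu> :: "complex measure"
  assumes "sets \<mu> = sets borel"
    and "infinite (measure_support \<mu>)"
    and "\<And>i j. integrable \<mu> (\<lambda>z. z ^ i * cnj z ^ j)"
  shows "(\<lambda>n. ereal (Re (moment \<mu> n n) powr (1 / real n)))
           \<longlonglongrightarrow> beta (shift_matrix (moment \<mu>)) (moment \<mu>)"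
proof -
  note int = assms(3)
  define S where "S = measure_support \<mu>"
  define L where "L = (SUP z\<in>S. ereal (norm z ^ 2))"
  define c where "c n = integral\<^sup>L \<mu> (\<lambda>z. norm z ^ (2*n))" for n
  define \<beta> where "\<beta> = beta (shift_matrix (moment \<mu>)) (moment \<mu>)"
  define f where "f n = ereal (c n powr (1 / real n))" for n
  have sp: "space \<mu> = UNIV"
    using sets_eq_imp_space_eq[OF assms(1)] by simp
  have sets_open: "B \<in> sets \<mu>" if "open B" for B
    using that assms(1) by simp
  have "integrable \<mu> (\<lambda>z. 1::complex)" using int[of 0 0] by simp
  then have "emeasure \<mu> (space \<mu>) < \<infinity>"
    by (simp add: integrable_iff_bounded)
  then interpret finite_measure \<mu>
    by (intro finite_measureI) simp
  have Sne: "S \<noteq> {}" using assms(2) unfolding S_def by auto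
  have Re_mom: "Re (moment \<mu> n n) = c n" for n
    unfolding moment_diag c_def by simp
  have c_int: "integrable \<mu> (\<lambda>z. norm z ^ (2*n))" for n
  proof -
    have "integrable \<mu> (\<lambda>z. Re (z^n * cnj z^n))" by (rule integrable_Re[OF int])
    moreover have "Re (z^n * cnj z^n) = norm z ^ (2*n)" for z :: complex
      by (metis Re_complex_of_real complex_norm_square power_mult power_mult_distrib complex_cnj_power mult.commute of_real_power)
    ultimately show ?thesis by simp
  qed
  have c_nonneg: "c n \<ge> 0" for n unfolding c_def by (rule integral_nonneg_AE) simp
  have AE_S: "AE z in \<mu>. z \<in> S"
  proof -
    define F where "F = {ball z e | z e. 0 < e \<and> emeasure \<mu> (ball z e) = 0}"
    obtain F' where F': "F' \<subseteq> F" "countable F'" "\<Union>F' = \<Union>F"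
      by (rule Lindelof[of F]) (auto simp: F_def)
    have "AE z in \<mu>. \<forall>B\<in>F'. z \<notin> B"
    proof (rule AE_ball_countable'[OF _ F'(2)])
      fix B assume "B \<in> F'"
      then have B: "B \<in> sets \<mu>" "emeasure \<mu> B = 0" using F'(1) sets_open by (auto simp: F_def)
      show "AE z in \<mu>. z \<notin> B"
        by (rule AE_I'[of B]) (use B in \<open>auto intro: null_setsI\<close>)
    qed
    then show ?thesis
    proof (rule eventually_mono)
      fix z assume z: "\<forall>B\<in>F'. z \<notin> B"
      show "z \<in> S"
      proof (rule ccontr)
        assume "z \<notin> S"
        then obtain e where "e > 0" "\<not> emeasure \<mu> (ball z e) > 0"
          unfolding S_def measure_support_def by auto
        then have "ball z e \<in> F" unfolding F_def by (auto simp: zero_less_iff_neq_zero)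
        moreover have "z \<in> ball z e" using \<open>e > 0\<close> by simp
        ultimately have "z \<in> \<Union>F'" using F'(3) by blast
        then show False using z by auto
      qed
    qed
  qed
  have L_nonneg: "L \<ge> 0"
  proof -
    obtain z where "z \<in> S" using Sne by auto
    then have "ereal (norm z ^ 2) \<le> L" unfolding L_def by (rule SUP_upper)
    then show ?thesis by (rule order_trans[rotated]) simp
  qed
  have c_pos: "c n > 0" for n
  proof (rule ccontr)
    assume "\<not> c n > 0"
    then have "c n = 0" using c_nonneg[of n] by simp
    then have "AE z in \<mu>. norm z ^ (2*n) = 0"
      unfolding c_def by (subst (asm) integral_nonneg_eq_0_iff_AE) (auto intro: c_int)
    then have AE0: "AE z in \<mu>. z = 0"
      by (rule eventually_mono) (auto simp: power_eq_0_iff)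
    have "S \<subseteq> {0}"
    proof
      fix z0 assume "z0 \<in> S"
      show "z0 \<in> {0}"
      proof (rule ccontr)
        assume "z0 \<notin> {0}"
        then have pos: "norm z0 > 0" by simp
        have "AE z in \<mu>. z \<notin> ball z0 (norm z0)"
          using AE0 by (rule eventually_mono) (simp add: dist_norm)
        then have "emeasure \<mu> (ball z0 (norm z0)) = 0"
          by (subst (asm) AE_iff_measurable[of "ball z0 (norm z0)"]) (auto simp: sp sets_open)
        moreover have "emeasure \<mu> (ball z0 (norm z0)) > 0"
          using \<open>z0 \<in> S\<close> pos unfolding S_def measure_support_def by auto
        ultimately show False by simp
      qed
    qed
    then have "finite S" by (rule finite_subset) simp
    then show False using assms(2) unfolding S_def by simp
  qed
  have beta_le: "\<beta> \<le> L"
    unfolding \<beta>_def beta_def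
  proof (rule SUP_least)
    fix v assume v: "v \<in> c00 - {\<lambda>_. 0}"
    define P where "P = (\<lambda>z::complex. (norm (\<Sum>i\<in>{i. v i \<noteq> 0}. v i * z ^ i))^2)"
    have m0: "moment \<mu> = (\<lambda>i j. moment \<mu> (i+0) (j+0))" by simp
    have m1: "shift_matrix (moment \<mu>) = (\<lambda>i j. moment \<mu> (i+1) (j+1))"
      by (simp add: shift_matrix_def fun_eq_iff)
    have Q0: "Re (qform (moment \<mu>) v) = integral\<^sup>L \<mu> P"
      by (subst m0, subst qform_integral(1)[OF int]) (simp add: P_def)
    have Q1: "Re (qform (shift_matrix (moment \<mu>)) v) = integral\<^sup>L \<mu> (\<lambda>z. norm z ^ 2 * P z)"
      by (subst m1, subst qform_integral(1)[OF int]) (simp add: P_def)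
    have IP: "integrable \<mu> P" using qform_integral(2)[OF int, of 0 v] by (simp add: P_def)
    have IP1: "integrable \<mu> (\<lambda>z. norm z ^ 2 * P z)" using qform_integral(2)[OF int, of 1 v] by (simp add: P_def)
    have P0: "integral\<^sup>L \<mu> P \<ge> 0" by (rule integral_nonneg_AE) (simp add: P_def)
    show "ereal (Re (qform (shift_matrix (moment \<mu>)) v) / Re (qform (moment \<mu>) v)) \<le> L"
    proof (cases L)
      case (real l)
      have AEl: "AE z in \<mu>. norm z ^ 2 \<le> l"
        using AE_S by (rule eventually_mono) (metis L_def SUP_upper ereal_less_eq(3) real)
      have "integral\<^sup>L \<mu> (\<lambda>z. norm z ^ 2 * P z) \<le> integral\<^sup>L \<mu> (\<lambda>z. l * P z)"
      proof (rule integral_mono_AE[OF IP1])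
        show "integrable \<mu> (\<lambda>z. l * P z)" using IP by simp
        show "AE z in \<mu>. norm z ^ 2 * P z \<le> l * P z"
          using AEl by (rule eventually_mono) (auto intro: mult_right_mono simp: P_def)
      qed
      also have "\<dots> = l * integral\<^sup>L \<mu> P" by simp
      finally have le: "integral\<^sup>L \<mu> (\<lambda>z. norm z ^ 2 * P z) \<le> l * integral\<^sup>L \<mu> P" .
      have "integral\<^sup>L \<mu> (\<lambda>z. norm z ^ 2 * P z) / integral\<^sup>L \<mu> P \<le> l"
      proof (cases "integral\<^sup>L \<mu> P = 0")
        case True then show ?thesis using L_nonneg real by simp
      next
        case False then have "integral\<^sup>L \<mu> P > 0" using P0 by simp
        then show ?thesis using le by (simp add: divide_le_eq mult.commute)
      qed
      then show ?thesis unfolding Q0 Q1 real by simp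
    qed (use L_nonneg in auto)
  qed
  have ratio: "ereal (c (Suc n) / c n) \<le> \<beta>" for n
  proof -
    define v where "v i = (if i = n then 1 else (0::complex))" for i
    have sup: "{i. v i \<noteq> 0} = {n}" by (auto simp: v_def)
    have vin: "v \<in> c00 - {\<lambda>_. 0}"
      unfolding c00_def using sup by (auto simp: fun_eq_iff v_def)
    have q: "qform A v = A n n" for A unfolding qform_def sup by (simp add: v_def)
    have "ereal (Re (qform (shift_matrix (moment \<mu>)) v) / Re (qform (moment \<mu>) v)) \<le> \<beta>"
      unfolding \<beta>_def beta_def by (rule SUP_upper[OF vin])
    then show ?thesis unfolding q shift_matrix_def Re_mom .
  qed
  have beta_pos: "\<beta> > 0"
    using ratio[of 0] c_pos[of 0] c_pos[of 1]
    by (metis divide_pos_pos ereal_less(2) order_less_le_trans One_nat_def)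
  have f_nonneg: "f n \<ge> 0" for n unfolding f_def by simp
  have low: "L \<le> Liminf sequentially f"
  proof (subst le_Liminf_iff, intro allI impI)
    fix y assume yL: "y < L"
    show "eventually (\<lambda>n. y < f n) sequentially"
    proof (cases "y < 0")
      case True
      have "y < f n" for n using True f_nonneg[of n] by (rule order_less_le_trans)
      then show ?thesis by simp
    next
      case False
      then obtain y' where y': "y = ereal y'" "y' \<ge> 0" using yL by (cases y) auto
      obtain z0 where z0: "z0 \<in> S" "y < ereal (norm z0 ^ 2)"
        using yL unfolding L_def by (auto simp: less_SUP_iff)
      obtain t where t: "y' < t" "t < norm z0 ^ 2" using z0(2) y'(1) dense[of y' "norm z0 ^ 2"] by auto
      have "open {w::complex. t < norm w ^ 2}"
        by (intro open_Collect_less continuous_intros)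
      then obtain d where d: "d > 0" "ball z0 d \<subseteq> {w. t < norm w ^ 2}"
        using t(2) by (meson mem_Collect_eq open_contains_ball_eq)
      define B where "B = ball z0 d"
      have Bs: "B \<in> sets \<mu>" unfolding B_def by (rule sets_open) simp
      have "emeasure \<mu> B > 0" using z0(1) d(1) unfolding B_def S_def measure_support_def by auto
      then have mpos: "measure \<mu> B > 0"
        by (simp add: emeasure_eq_measure zero_less_measure_iff)
      have tpos: "t > 0" using t y' by simp
      have cge: "c n \<ge> measure \<mu> B * t ^ n" for n
      proof -
        have "integral\<^sup>L \<mu> (\<lambda>z. indicator B z * t ^ n) \<le> c n"
          unfolding c_def
        proof (rule integral_mono[OF _ c_int])
          show "integrable \<mu> (\<lambda>z. indicator B z * t ^ n)"
            using Bs by (intro integrable_mult_left integrable_real_indicator) (auto simp: less_top[symmetric])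
          fix z show "indicator B z * t ^ n \<le> norm z ^ (2*n)"
          proof (cases "z \<in> B")
            case True
            then have "t \<le> norm z ^ 2" using d(2) unfolding B_def by auto
            then have "t ^ n \<le> (norm z ^ 2) ^ n" using tpos by (intro power_mono) auto
            then show ?thesis using True by (simp add: power_mult)
          qed simp
        qed
        then show ?thesis using Bs by simp
      qed
      have lim: "(\<lambda>n. measure \<mu> B powr (1 / real n) * t) \<longlonglongrightarrow> 1 * t"
        by (intro tendsto_mult tendsto_const powr_lim1 mpos)
      have "eventually (\<lambda>n. y' < measure \<mu> B powr (1 / real n) * t) sequentially"
        using lim t(1) by (intro order_tendstoD(1)) auto
      moreover have "eventually (\<lambda>n. n \<ge> 1) sequentially" by (rule eventually_ge_at_top)
      ultimately show ?thesis
      proof eventually_elim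
        case (elim n)
        have "measure \<mu> B powr (1 / real n) * t = (measure \<mu> B * t ^ n) powr (1 / real n)"
          using elim mpos tpos by (subst root_mult_pow) auto
        also have "\<dots> \<le> c n powr (1 / real n)"
          using cge[of n] mpos tpos by (intro powr_mono2) auto
        finally show ?case using elim unfolding f_def y' by simp
      qed
    qed
  qed
  have up: "Limsup sequentially f \<le> \<beta>"
  proof (subst Limsup_le_iff, intro allI impI)
    fix y assume yb: "y > \<beta>"
    show "eventually (\<lambda>n. y > f n) sequentially"
    proof (cases y)
      case PInf then show ?thesis by (simp add: f_def)
    next
      case MInf then show ?thesis using yb by simp
    next
      case (real y')
      then obtain b where b: "\<beta> = ereal b" using yb beta_pos by (cases \<beta>) auto
      have bpos: "b > 0" using beta_pos b by simp
      have step: "c (Suc n) \<le> b * c n" for n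
        using ratio[of n] c_pos[of n] b by (simp add: pos_divide_le_eq)
      have cle: "c n \<le> c 0 * b ^ n" for n
      proof (induction n)
        case (Suc n)
        have "c (Suc n) \<le> b * c n" by (rule step)
        also have "\<dots> \<le> b * (c 0 * b ^ n)" using Suc bpos by (intro mult_left_mono) auto
        finally show ?case by (simp add: algebra_simps)
      qed simp
      have lim: "(\<lambda>n. c 0 powr (1 / real n) * b) \<longlonglongrightarrow> 1 * b"
        by (intro tendsto_mult tendsto_const powr_lim1 c_pos)
      have "eventually (\<lambda>n. c 0 powr (1 / real n) * b < y') sequentially"
        using lim yb b real by (intro order_tendstoD(2)) auto
      moreover have "eventually (\<lambda>n. n \<ge> 1) sequentially" by (rule eventually_ge_at_top)
      ultimately show ?thesis
      proof eventually_elim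
        case (elim n)
        have "c n powr (1 / real n) \<le> (c 0 * b ^ n) powr (1 / real n)"
          using cle[of n] c_nonneg[of n] by (intro powr_mono2) auto
        also have "\<dots> = c 0 powr (1 / real n) * b"
          using elim bpos c_pos[of 0] by (subst root_mult_pow) auto
        finally show ?case using elim unfolding f_def real by simp
      qed
    qed
  qed
  have "Liminf sequentially f \<le> Limsup sequentially f" by (rule Liminf_le_Limsup) simp
  then have "Liminf sequentially f = \<beta>" "Limsup sequentially f = \<beta>"
    using low up beta_le by auto
  then have "f \<longlonglongrightarrow> \<beta>" by (intro Liminf_eq_Limsup) auto
  then show ?thesis unfolding f_def \<beta>_def Re_mom .
qed

end
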